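(* In the fixed-base chain setting of the context, let $i\in\{1,\ldots,N\}$ and suppose $\mathbf{V}_{i-1}$ is a matrix with $\mathrm{Range}(\mathbf{V}_{i-1})=\mathcal{V}_{i-1}$ (for $i=1$ one may take $\mathbf{V}_0=\mathbf{0}_{6\times1}$). Let ${}^{J_i}\mathbf{V}_{i-1}={}^{J_i}\mathbf{X}_{i-1}\mathbf{V}_{i-1}$. Then the matrix $$\mathbf{V}_i=\Big[\ {}^{J_i}\mathbf{V}_{i-1},\ (\boldsymbol{\Phi}_i\times){}^{J_i}\mathbf{V}_{i-1},\ \ldots,\ (\boldsymbol{\Phi}_i\times)^5\,{}^{J_i}\mathbf{V}_{i-1},\ \ \boldsymbol{\Phi}_i\ \Big]$$ (i.e. the controllability matrix of the pair $((\boldsymbol\Phi_i\times),{}^{J_i}\mathbf V_{i-1})$ augmented by the column $\boldsymbol\Phi_i$) satisfies $\mathrm{Range}(\mathbf{V}_i)=\mathcal{V}_i$.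
   Context: Spatial notation. For $\mathbf{x}\in\mathbb{R}^3$, $\mathbf{S}(\mathbf{x})$ is the skew-symmetric matrix with $\mathbf{S}(\mathbf{x})\mathbf{y}=\mathbf{x}\times\mathbf{y}$. For $\mathbf{v}=[\boldsymbol{\omega};\mathbf{u}]\in\mathbb{R}^6$, $(\mathbf{v}\times)=\begin{bmatrix}\mathbf{S}(\boldsymbol{\omega})&\mathbf{0}\\ \mathbf{S}(\mathbf{u})&\mathbf{S}(\boldsymbol{\omega})\end{bmatrix}$. A spatial transform is a matrix $\begin{bmatrix}\mathbf{R}&\mathbf{0}\\-\mathbf{R}\mathbf{S}(\mathbf{p})&\mathbf{R}\end{bmatrix}$ with $\mathbf{R}\in SO(3)$, $\mathbf{p}\in\mathbb{R}^3$. Fixed-base chain. Body $0$ is the fixed ground with $\mathbf{v}_0=\mathbf{0}$. For $i=1,\ldots,N$, joint $i$ has coordinate $q_i\in\mathbb{R}$ and $\mathbf{v}_i={}^{i}\mathbf{X}_{i-1}(q_i)\mathbf{v}_{i-1}+\boldsymbol{\Phi}_i\dot q_i$, where $\boldsymbol{\Phi}_i\in\mathbb{R}^6$ is fixed, ${}^{i}\mathbf{X}_{i-1}(q_i)={}^{i}\mathbf{X}_{J_i}(q_i)\,{}^{J_i}\mathbf{X}_{i-1}$, ${}^{J_i}\mathbf{X}_{i-1}$ is a constant spatial transform, and ${}^{i}\mathbf{X}_{J_i}(q_i)$ is a spatial transform with ${}^{i}\mathbf{X}_{J_i}(0)=\mathbf{1}_6$ and $\frac{d}{dq_i}{}^{i}\mathbf{X}_{J_i}(q_i)=-(\boldsymbol{\Phi}_i\times){}^{i}\mathbf{X}_{J_i}(q_i)$.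 The attainable velocity span of body $i$ is $\mathcal{V}_i=\mathrm{span}\{\mathbf{v}_i(\mathbf{q},\dot{\mathbf{q}}):\mathbf{q},\dot{\mathbf{q}}\in\mathbb{R}^N\}\subseteq\mathbb{R}^6$, with $\mathcal V_0=\{\mathbf 0\}$. *)

theory Defs
  imports "HOL-Analysis.Analysis"
begin

text \<open>Spatial vectors are elements of real^6; components 1..3 form the angular part
  omega, components 4..6 the linear part u.\<close>

definition ang :: "real^6 \<Rightarrow> real^3" where
  "ang v = vector [v$1, v$2, v$3]"

definition lin :: "real^6 \<Rightarrow> real^3" where
  "lin v = vector [v$4, v$5, v$6]"

definition spv :: "real^3 \<Rightarrow> real^3 \<Rightarrow> real^6" where
  "spv w u = vector [w$1, w$2, w$3, u$1, u$2, u$3]"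

text \<open>Skew-symmetric matrix S(x) with S(x) y = x \<times> y.\<close>
definition skew :: "real^3 \<Rightarrow> real^3^3" where
  "skew x = matrix (\<lambda>y. cross3 x y)"

text \<open>Block 6x6 matrix [[A, B], [C, D]] with 3x3 blocks.\<close>
definition blk :: "real^3^3 \<Rightarrow> real^3^3 \<Rightarrow> real^3^3 \<Rightarrow> real^3^3 \<Rightarrow> real^6^6" where
  "blk A B C D = matrix (\<lambda>y. spv (A *v ang y + B *v lin y) (C *v ang y + D *v lin y))"

text \<open>Spatial cross-product matrix (v\<times>) = [[S(omega), 0], [S(u), S(omega)]].\<close>
definition crossm :: "real^6 \<Rightarrow> real^6^6" where
  "crossm v = blk (skew (ang v)) 0 (skew (lin v)) (skew (ang v))"

definition SO3 :: "(real^3^3) set" where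
  "SO3 = {R. orthogonal_matrix R \<and> det R = 1}"

text \<open>Spatial transform [[R, 0], [-R S(p), R]] with R in SO(3).\<close>
definition is_spatial_transform :: "real^6^6 \<Rightarrow> bool" where
  "is_spatial_transform X \<longleftrightarrow>
     (\<exists>R p. R \<in> SO3 \<and> X = blk R 0 (- (R ** skew p)) R)"

text \<open>Body velocities of the fixed-base chain: v_0 = 0,
  v_i = (iXJi(q_i) JiX(i-1)) v_(i-1) + Phi_i qdot_i.\<close>
primrec vel :: "(nat \<Rightarrow> real \<Rightarrow> real^6^6) \<Rightarrow> (nat \<Rightarrow> real^6^6) \<Rightarrow> (nat \<Rightarrow> real^6)
    \<Rightarrow> nat \<Rightarrow> (nat \<Rightarrow> real) \<Rightarrow> (nat \<Rightarrow> real) \<Rightarrow> real^6" where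
  "vel XJ XT Phi 0 q qd = 0"
| "vel XJ XT Phi (Suc n) q qd =
     (XJ (Suc n) (q (Suc n)) ** XT (Suc n)) *v vel XJ XT Phi n q qd + qd (Suc n) *\<^sub>R Phi (Suc n)"

text \<open>Attainable velocity span of body i (joint coordinates q_1..q_N, qdot_1..qdot_N are the
  values of q, qd at 1..N; v_i only depends on the entries 1..i).\<close>
definition attainable :: "nat \<Rightarrow> (nat \<Rightarrow> real \<Rightarrow> real^6^6) \<Rightarrow> (nat \<Rightarrow> real^6^6) \<Rightarrow> (nat \<Rightarrow> real^6)
    \<Rightarrow> nat \<Rightarrow> (real^6) set" where
  "attainable N XJ XT Phi i = span {vel XJ XT Phi i q qd | q qd. True}"

text \<open>Range (column space) of a matrix.\<close>
definition Range :: "real^'k^'m \<Rightarrow> (real^'m) set" where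
  "Range M = {M *v x | x. True}"

text \<open>The controllability matrix [W, A W, ..., A^5 W] augmented by the column phi.
  Column (j, c) (j ranges over the six elements 0..5 of type 6) is column c of A^j W;
  the extra column Inr is phi.\<close>
definition augctrl :: "real^6^6 \<Rightarrow> real^6 \<Rightarrow> real^'k^6 \<Rightarrow> real^((6 \<times> 'k) + 1)^6" where
  "augctrl A phi W = (\<chi> r s. case s of
       Inl (j, c) \<Rightarrow> ((((**) A) ^^ nat (Rep_bit0 j)) W) $ r $ c
     | Inr _ \<Rightarrow> phi $ r)"

end

theory Submission
  imports Defs
begin

lemma ode_zero_fwd:
  fixes z :: "real \<Rightarrow> 'a::euclidean_space" and L :: "'a \<Rightarrow> 'a"
  assumes lin: "linear L" and d: "\<And>t. (z has_vector_derivative L (z t)) (at t)"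
    and z0: "z 0 = 0" and t: "t \<ge> 0"
  shows "z t = 0"
proof -
  obtain c where c: "c > 0" "\<And>x. norm (L x) \<le> c * norm x"
    using linear_bounded_pos[OF lin] by blast
  define F where "F s = (z s \<bullet> z s) * exp (-(2*c) * s)" for s
  have dF: "(F has_real_derivative (2 * (z s \<bullet> L (z s)) - 2*c*(z s \<bullet> z s)) * exp (-(2*c) * s)) (at s)" for s
  proof -
    have "((\<lambda>s. z s \<bullet> z s) has_vector_derivative (z s \<bullet> L (z s) + L (z s) \<bullet> z s)) (at s)"
      using bounded_bilinear.has_vector_derivative[OF bounded_bilinear_inner d d] by simp
    then have 1: "((\<lambda>s. z s \<bullet> z s) has_real_derivative 2 * (z s \<bullet> L (z s))) (at s)"
      by (simp add: has_real_derivative_iff_has_vector_derivative inner_commute)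
    show ?thesis unfolding F_def
      by (rule derivative_eq_intros 1 refl | simp)+ (simp add: algebra_simps)
  qed
  have neg: "(2 * (z s \<bullet> L (z s)) - 2*c*(z s \<bullet> z s)) * exp (-(2*c) * s) \<le> 0" for s
  proof -
    have "z s \<bullet> L (z s) \<le> norm (z s) * norm (L (z s))" by (rule Cauchy_Schwarz_ineq2[THEN order_trans[OF abs_ge_self]])
    also have "\<dots> \<le> norm (z s) * (c * norm (z s))" by (rule mult_left_mono[OF c(2)]) simp
    also have "\<dots> = c * (z s \<bullet> z s)" by (simp add: power2_norm_eq_inner[symmetric] power2_eq_square)
    finally show ?thesis by (simp add: mult_nonpos_nonneg)
  qed
  have "F t \<le> F 0"
    by (rule DERIV_nonpos_imp_nonincreasing[OF t]) (use dF neg in blast)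
  then have "z t \<bullet> z t \<le> 0" using z0 by (simp add: F_def mult_le_0_iff)
  then show ?thesis by (metis inner_ge_zero inner_eq_zero_iff order_antisym)
qed

lemma ode_zero:
  fixes z :: "real \<Rightarrow> 'a::euclidean_space" and L :: "'a \<Rightarrow> 'a"
  assumes lin: "linear L" and d: "\<And>t. (z has_vector_derivative L (z t)) (at t)"
    and z0: "z 0 = 0"
  shows "z t = 0"
proof (cases "t \<ge> 0")
  case True then show ?thesis using ode_zero_fwd[OF lin d z0] by blast
next
  case False
  define w where "w s = z (- s)" for s
  have lin2: "linear (\<lambda>x. - L x)" using lin by (simp add: linear_compose_neg)
  have dw: "(w has_vector_derivative - L (w s)) (at s)" for s
  proof -
    have "((z \<circ> uminus) has_vector_derivative ((-1) *\<^sub>R L (z (- s)))) (at s)"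
      by (rule vector_diff_chain_at) (auto intro!: derivative_eq_intros d)
    then show ?thesis by (simp add: w_def[abs_def] o_def)
  qed
  have "w (- t) = 0" by (rule ode_zero_fwd[OF lin2 dw]) (use z0 False in \<open>auto simp: w_def\<close>)
  then show ?thesis by (simp add: w_def)
qed

lemma proj_exists:
  fixes K :: "'a::euclidean_space set"
  assumes "subspace K"
  obtains P where "linear P" "\<And>x. x - P x \<in> K" "\<And>k. k \<in> K \<Longrightarrow> P k = 0"
proof -
  obtain B where B: "B \<subseteq> K" "pairwise orthogonal B" "span B = K"
    using orthogonal_basis_subspace[OF assms] by metis
  define Q where "Q x = (\<Sum>b\<in>B. (b \<bullet> x / (b \<bullet> b)) *\<^sub>R b)" for x
  define P where "P x = x - Q x" for x
  have "linear Q" unfolding Q_def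
    by (rule linearI) (simp_all add: inner_add_right add_divide_distrib scaleR_add_left sum.distrib
        scaleR_sum_right)
  then have linP: "linear P" unfolding P_def by (simp add: linear_compose_sub linear_id[unfolded id_def])
  have QK: "Q x \<in> K" for x
    unfolding Q_def using B by (metis (no_types, lifting) span_base span_mul span_sum subsetD)
  have 1: "x - P x \<in> K" for x using QK by (simp add: P_def)
  have 2: "P k = 0" if "k \<in> K" for k
  proof -
    have "P k \<in> K" unfolding P_def using that QK by (simp add: assms subspace_diff)
    then have "orthogonal (P k) (P k)"
      using Gram_Schmidt_step[OF B(2), of "P k" k] B(3) by (simp add: P_def Q_def)
    then show ?thesis by (simp add: orthogonal_def)
  qed
  show ?thesis using that[OF linP 1 2] .
qed

lemma neg_mv: "(- (M::real^'n^'m)) *v k = - (M *v k)"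
  using matrix_vector_mult_diff_rdistrib[of 0 M k] by simp

lemma bl_mv: "bounded_linear (\<lambda>M::real^'n^'m. M *v k)"
proof -
  have "linear (\<lambda>M::real^'n^'m. M *v k)"
    by (rule linearI) (simp_all add: matrix_vector_mult_add_rdistrib scaleR_matrix_vector_assoc)
  then show ?thesis by (simp add: linear_conv_bounded_linear)
qed

lemma linear_pow: "linear (((*v) (A::real^'n^'n)) ^^ j)"
proof (induction j)
  case 0 then show ?case by (simp add: linear_id[unfolded id_def])
next
  case (Suc j)
  have "linear ((*v) A)" by (simp add: matrix_vector_mul_linear)
  then show ?case unfolding funpow.simps(2) by (rule linear_compose[OF Suc.IH])
qed

lemma flow_invariant:
  fixes X :: "real \<Rightarrow> real^'n^'n" and A :: "real^'n^'n"
  assumes K: "subspace K" and AK: "\<And>x. x \<in> K \<Longrightarrow> A *v x \<in> K"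
    and dX: "\<And>t. (X has_vector_derivative (- (A ** X t))) (at t)" and X0: "X 0 = mat 1"
    and k: "k \<in> K"
  shows "X t *v k \<in> K"
proof -
  obtain P where P: "linear P" "\<And>x. x - P x \<in> K" "\<And>k. k \<in> K \<Longrightarrow> P k = 0"
    using proj_exists[OF K] by metis
  define z where "z s = P (X s *v k)" for s
  have linL: "linear (\<lambda>y. - P (A *v y))"
    by (intro linear_compose_neg linear_compose[OF matrix_vector_mul_linear P(1), unfolded o_def])
  have dz: "(z has_vector_derivative - P (A *v z s)) (at s)" for s
  proof -
    have "((\<lambda>s. X s *v k) has_vector_derivative (- (A ** X s)) *v k) (at s)"
      by (rule bounded_linear.has_vector_derivative[OF bl_mv dX])
    then have "(z has_vector_derivative P ((- (A ** X s)) *v k)) (at s)"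
      unfolding z_def[abs_def]
      by (rule bounded_linear.has_vector_derivative[OF linear_conv_bounded_linear[THEN iffD1, OF P(1)]])
    moreover have "P ((- (A ** X s)) *v k) = - P (A *v z s)"
    proof -
      have e: "(- (A ** X s)) *v k = - (A *v (X s *v k))"
        by (simp add: matrix_vector_mul_assoc neg_mv)
      have "P (A *v (X s *v k)) = P (A *v (X s *v k - P (X s *v k))) + P (A *v P (X s *v k))"
        by (simp add: matrix_vector_right_distrib[symmetric] linear_add[OF P(1), symmetric])
      also have "\<dots> = P (A *v z s)" using P(3)[OF AK[OF P(2)]] by (simp add: z_def)
      finally show ?thesis using e by (simp add: linear_neg[OF P(1)])
    qed
    ultimately show ?thesis by simp
  qed
  have "z t = 0"
    by (rule ode_zero[OF linL dz]) (simp add: z_def X0 P(3)[OF k])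
  then show ?thesis using P(2)[of "X t *v k"] by (simp add: z_def)
qed

lemma in_span_by_orth:
  fixes x :: "'a::euclidean_space"
  assumes "\<And>y. (\<forall>l\<in>S. y \<bullet> l = 0) \<Longrightarrow> y \<bullet> x = 0"
  shows "x \<in> span S"
proof -
  obtain a b where ab: "a \<in> span S" "\<And>w. w \<in> span S \<Longrightarrow> orthogonal b w" "x = a + b"
    using orthogonal_subspace_decomp_exists[of S x] by metis
  have "\<forall>l\<in>S. b \<bullet> l = 0" using ab(2) span_base by (auto simp: orthogonal_def)
  then have "b \<bullet> x = 0" by (rule assms)
  moreover have "b \<bullet> a = 0" using ab(2)[OF ab(1)] by (simp add: orthogonal_def)
  ultimately have "b \<bullet> b = 0" using ab(3) by (simp add: inner_add_right)
  then show ?thesis using ab by simp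
qed

lemma deriv_span:
  fixes X :: "real \<Rightarrow> real^'n^'n" and A :: "real^'n^'n"
  assumes dX: "\<And>t. (X has_vector_derivative (- (A ** X t))) (at t)" and X0: "X 0 = mat 1"
    and w: "w \<in> W"
  shows "(((*v) A) ^^ j) w \<in> span {X t *v u | t u. u \<in> W}"
proof -
  let ?L = "{X t *v u | t u. u \<in> W}"
  have main: "\<forall>t. y \<bullet> ((((*v) A) ^^ j) (X t *v w)) = 0" if y: "\<forall>l\<in>?L. y \<bullet> l = 0" for y
  proof (induction j)
    case 0 then show ?case using y w by auto
  next
    case (Suc j)
    show ?case
    proof
      fix t
      let ?g = "\<lambda>s. y \<bullet> ((((*v) A) ^^ j) (X s *v w))"
      have bl: "bounded_linear (\<lambda>M::real^'n^'n. y \<bullet> ((((*v) A) ^^ j) (M *v w)))"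
      proof -
        have "linear (\<lambda>M::real^'n^'n. y \<bullet> ((((*v) A) ^^ j) (M *v w)))"
          using linear_compose[OF linear_compose[OF bl_mv[THEN bounded_linear.linear] linear_pow[of j A]]
              bounded_linear_inner_right[of y, THEN bounded_linear.linear]] by (simp add: o_def)
        then show ?thesis by (simp add: linear_conv_bounded_linear)
      qed
      have sucr: "\<And>x. (((*v) A) ^^ Suc j) x = (((*v) A) ^^ j) (A *v x)"
        by (simp add: funpow_Suc_right del: funpow.simps)
      have "(?g has_vector_derivative y \<bullet> ((((*v) A) ^^ j) ((- (A ** X t)) *v w))) (at t)"
        by (rule bounded_linear.has_vector_derivative[OF bl dX])
      then have d1: "(?g has_real_derivative - (y \<bullet> ((((*v) A) ^^ Suc j) (X t *v w)))) (at t)"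
        using sucr by (simp add: has_real_derivative_iff_has_vector_derivative neg_mv
            linear_neg[OF linear_pow] matrix_vector_mul_assoc[symmetric] del: funpow.simps)
      have "?g = (\<lambda>s. 0)" using Suc.IH by auto
      then have d2: "(?g has_real_derivative 0) (at t)" by simp
      show "y \<bullet> ((((*v) A) ^^ Suc j) (X t *v w)) = 0" using DERIV_unique[OF d1 d2] by simp
    qed
  qed
  show ?thesis
  proof (rule in_span_by_orth)
    fix y assume "\<forall>l\<in>?L. y \<bullet> l = 0"
    from main[OF this] have "y \<bullet> ((((*v) A) ^^ j) (X 0 *v w)) = 0" by blast
    then show "y \<bullet> ((((*v) A) ^^ j) w) = 0" using X0 by simp
  qed
qed

definition Kr :: "real^'n^'n \<Rightarrow> (real^'n) set \<Rightarrow> nat \<Rightarrow> (real^'n) set" where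
  "Kr A W m = span (\<Union>j<m. (((*v) A) ^^ j) ` W)"

lemma Kr_mono: "Kr A W m \<subseteq> Kr A W (Suc m)"
  unfolding Kr_def by (rule span_mono) (force simp: lessThan_Suc)

lemma Kr_step: assumes "x \<in> Kr A W m" shows "A *v x \<in> Kr A W (Suc m)"
proof -
  have "A *v x \<in> (*v) A ` Kr A W m" using assms by blast
  also have "\<dots> = span ((*v) A ` (\<Union>j<m. (((*v) A) ^^ j) ` W))"
    unfolding Kr_def by (rule linear_span_image[symmetric]) (simp add: matrix_vector_mul_linear)
  also have "\<dots> \<subseteq> Kr A W (Suc m)" unfolding Kr_def
  proof (rule span_mono, clarify)
    fix j w assume "j < m" "w \<in> W"
    then show "A *v (((*v) A ^^ j) w) \<in> (\<Union>j<Suc m. ((*v) A ^^ j) ` W)"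
      by (auto intro!: bexI[of _ "Suc j"] simp del: funpow.simps simp: funpow.simps(2)[of j])
  qed
  finally show ?thesis .
qed

lemma Kr_stab: assumes "Kr A W m = Kr A W (Suc m)" shows "Kr A W (Suc m) = Kr A W (Suc (Suc m))"
proof
  show "Kr A W (Suc m) \<subseteq> Kr A W (Suc (Suc m))" by (rule Kr_mono)
  have "Kr A W (Suc (Suc m)) \<subseteq> Kr A W (Suc m)" unfolding Kr_def[of A W "Suc (Suc m)"]
  proof (rule span_minimal[OF _ subspace_span[of "\<Union>j<Suc m. (((*v) A) ^^ j) ` W", folded Kr_def]], clarify)
    fix j w assume j: "j < Suc (Suc m)" and w: "w \<in> W"
    show "(((*v) A) ^^ j) w \<in> Kr A W (Suc m)"
    proof (cases j)
      case 0 then show ?thesis using w unfolding Kr_def by (auto intro!: span_base)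
    next
      case (Suc j')
      have "(((*v) A) ^^ j') w \<in> Kr A W (Suc m)" using j w Suc unfolding Kr_def
        by (auto intro!: span_base)
      then have "(((*v) A) ^^ j') w \<in> Kr A W m" using assms by simp
      then show ?thesis using Kr_step Suc by simp
    qed
  qed
  then show "Kr A W (Suc (Suc m)) \<subseteq> Kr A W (Suc m)" .
qed

lemma Kr_stab_all: assumes "Kr A W m = Kr A W (Suc m)"
  shows "Kr A W (m + d) = Kr A W m \<and> Kr A W (m + d) = Kr A W (Suc (m + d))"
proof (induction d)
  case 0 then show ?case using assms by simp
next
  case (Suc d)
  then show ?case using Kr_stab[of A W "m + d"] by (metis add_Suc_right)
qed

lemma Kr_invariant:
  fixes A :: "real^'n^'n"
  assumes "x \<in> Kr A W CARD('n)" shows "A *v x \<in> Kr A W CARD('n)"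
proof (cases "\<exists>m<CARD('n). Kr A W m = Kr A W (Suc m)")
  case True
  then obtain m where m: "m < CARD('n)" "Kr A W m = Kr A W (Suc m)" by blast
  then have "Kr A W CARD('n) = Kr A W m \<and> Kr A W CARD('n) = Kr A W (Suc CARD('n))"
    using Kr_stab_all[OF m(2), of "CARD('n) - m"] m(1) by (metis le_add_diff_inverse less_imp_le_nat)
  then show ?thesis using Kr_step[OF assms] by metis
next
  case False
  have "m \<le> CARD('n) \<Longrightarrow> m \<le> dim (Kr A W m)" for m
  proof (induction m)
    case 0 then show ?case by simp
  next
    case (Suc m)
    have "Kr A W m \<subset> Kr A W (Suc m)" using Kr_mono[of A W m] False Suc.prems by auto
    then have "dim (Kr A W m) < dim (Kr A W (Suc m))"
      by (intro dim_psubset) (simp add: Kr_def span_span)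
    then show ?case using Suc by simp
  qed
  then have "dim (Kr A W CARD('n)) = DIM(real^'n)"
    using dim_subset_UNIV_cart[of "Kr A W CARD('n)"] by (simp add: order_antisym)
  then have "span (Kr A W CARD('n)) = UNIV" by (simp only: dim_eq_full)
  then have "Kr A W CARD('n) = UNIV" by (simp add: Kr_def span_span)
  then show ?thesis by simp
qed

lemma vel_upd: "n < m \<Longrightarrow> vel XJ XT Phi n (q(m:=a)) (qd(m:=b)) = vel XJ XT Phi n q qd"
  by (induction n) auto

lemma vel_zero: "vel XJ XT Phi n q (\<lambda>_. 0) = 0"
  by (induction n) auto

lemma S_Suc: "{vel XJ XT Phi (Suc n) q qd | q qd. True} =
   {(XJ (Suc n) t ** XT (Suc n)) *v v + c *\<^sub>R Phi (Suc n) | v t c. v \<in> {vel XJ XT Phi n q qd | q qd. True}}"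
  (is "?L = ?R")
proof
  show "?L \<subseteq> ?R" by auto
  show "?R \<subseteq> ?L"
  proof
    fix x assume "x \<in> ?R"
    then obtain t c q qd where x: "x = (XJ (Suc n) t ** XT (Suc n)) *v vel XJ XT Phi n q qd + c *\<^sub>R Phi (Suc n)"
      by blast
    have "x = vel XJ XT Phi (Suc n) (q(Suc n := t)) (qd(Suc n := c))"
      using x by (simp add: vel_upd)
    then show "x \<in> ?L" by blast
  qed
qed

lemma powmat_mv: fixes A :: "real^'n^'n" and M :: "real^'k^'n"
  shows "((((**) A) ^^ k) M) *v x = (((*v) A) ^^ k) (M *v x)"
  by (induction k) (simp_all add: matrix_vector_mul_assoc[symmetric])

lemma range_subspace: "subspace (Range (M::real^'k^'m))"
proof -
  have "Range M = (*v) M ` UNIV" by (auto simp: Range_def)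
  then show ?thesis by (simp add: linear_subspace_image matrix_vector_mul_linear subspace_UNIV)
qed

lemma col_in_range: "column c M \<in> Range M"
  unfolding Range_def by (auto intro!: exI[of _ "axis c 1"] simp: matrix_vector_mult_basis)

lemma range_span_cols: "Range (M::real^'k^'m) = span (columns M)"
proof
  show "Range M \<subseteq> span (columns M)"
    unfolding Range_def using matrix_vector_mult_in_columnspace by blast
  show "span (columns M) \<subseteq> Range M"
    by (rule span_minimal[OF _ range_subspace]) (auto simp: columns_def col_in_range)
qed

lemma colR: "column (Inr u) (augctrl (A::real^6^6) phi (M::real^'k^6)) = phi"
  unfolding column_def augctrl_def by (simp add: vec_eq_iff)
lemma colL: "column (Inl (j, c)) (augctrl (A::real^6^6) phi (M::real^'k^6)) = column c ((((**) A) ^^ nat (Rep_bit0 j)) M)"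
  unfolding column_def augctrl_def by simp
lemma aug_range:
  fixes A :: "real^6^6" and M :: "real^'k^6"
  shows "Range (augctrl A phi M) = span ((\<Union>j<6. (((*v) A) ^^ j) ` Range M) \<union> {phi})"
proof -
  let ?G = "(\<Union>j<6. (((*v) A) ^^ j) ` Range M) \<union> {phi}"
  show ?thesis
  proof
    have "columns (augctrl A phi M) \<subseteq> ?G"
    proof
      fix x assume "x \<in> columns (augctrl A phi M)"
      then obtain s where x: "x = column s (augctrl A phi M)" by (auto simp: columns_def)
      show "x \<in> ?G"
      proof (cases s)
        case (Inl jc)
        obtain j c where jc: "jc = (j, c)" by fastforce
        have "nat (Rep_bit0 j) < 6" using Rep_bit0[of j] by (simp add: nat_less_iff)
        moreover have "x = ((*v) A ^^ nat (Rep_bit0 j)) (M *v axis c 1)"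
        proof -
          have "x = column c ((((**) A) ^^ nat (Rep_bit0 j)) M)"
            using Inl jc x by (simp add: colL)
          also have "\<dots> = ((((**) A) ^^ nat (Rep_bit0 j)) M) *v axis c 1"
            by (simp add: matrix_vector_mult_basis)
          also have "\<dots> = ((*v) A ^^ nat (Rep_bit0 j)) (M *v axis c 1)" by (rule powmat_mv)
          finally show ?thesis .
        qed
        moreover have "M *v axis c 1 \<in> Range M" by (auto simp: Range_def)
        ultimately show ?thesis by blast
      next
        case (Inr u) then show ?thesis using x by (simp add: colR)
      qed
    qed
    then show "Range (augctrl A phi M) \<subseteq> span ?G"
      unfolding range_span_cols[of "augctrl A phi M"] by (rule span_mono)
    show "span ?G \<subseteq> Range (augctrl A phi M)"
    proof (rule span_minimal[OF _ range_subspace], clarify)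
      fix x assume "x \<in> ?G"
      then consider "x = phi" | k w where "k < 6" "w \<in> Range M" "x = (((*v) A) ^^ k) w" by blast
      then show "x \<in> Range (augctrl A phi M)"
      proof cases
        case 1 then show ?thesis using col_in_range[of "Inr 1" "augctrl A phi M"] by (simp add: colR)
      next
        case 2
        obtain y where y: "w = M *v y" using 2 by (auto simp: Range_def)
        have "x = ((((**) A) ^^ k) M) *v y" using 2 y by (simp add: powmat_mv)
        also have "\<dots> \<in> span (columns ((((**) A) ^^ k) M))"
          by (rule matrix_vector_mult_in_columnspace)
        also have "\<dots> \<subseteq> Range (augctrl A phi M)"
        proof (rule span_minimal[OF _ range_subspace], clarsimp simp: columns_def)
          fix c
          have "nat (Rep_bit0 (Abs_bit0 (int k) :: 6)) = k" using 2 by (simp add: Abs_bit0_inverse)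
          then have "column c ((((**) A) ^^ k) M) = column (Inl (Abs_bit0 (int k), c)) (augctrl A phi M)"
            by (simp add: colL)
          then show "column c ((((**) A) ^^ k) M) \<in> Range (augctrl A phi M)"
            by (simp add: col_in_range)
        qed
        finally show ?thesis .
      qed
    qed
  qed
qed

theorem lemma1:
  fixes N i :: nat
    and XJ :: "nat \<Rightarrow> real \<Rightarrow> real^6^6"
    and XT :: "nat \<Rightarrow> real^6^6"
    and Phi :: "nat \<Rightarrow> real^6"
    and V :: "real^'k^6"
  assumes "\<forall>j\<in>{1..N}. is_spatial_transform (XT j)"
    and "\<forall>j\<in>{1..N}. \<forall>x. is_spatial_transform (XJ j x)"
    and "\<forall>j\<in>{1..N}. XJ j 0 = mat 1"
    and "\<forall>j\<in>{1..N}. \<forall>x. (XJ j has_vector_derivative (- (crossm (Phi j) ** XJ j x))) (at x)"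
    and "i \<in> {1..N}"
    and "Range V = attainable N XJ XT Phi (i - 1)"
  shows "Range (augctrl (crossm (Phi i)) (Phi i) (XT i ** V)) = attainable N XJ XT Phi i"
proof -
  obtain n where i: "i = Suc n" using assms(5) by (cases i) auto
  define A where "A = crossm (Phi i)"
  define X where "X = XJ i"
  define T where "T = XT i"
  define S where "S = {vel XJ XT Phi n q qd | q qd. True}"
  define W where "W = Range (T ** V)"
  define K where "K = Kr A W 6"
  define G where "G = (\<Union>j<6. (((*v) A) ^^ j) ` W) \<union> {Phi i}"
  define Si where "Si = {X t *v (T *v v) + c *\<^sub>R Phi i | v t c. v \<in> S}"
  have dX: "\<And>t. (X has_vector_derivative - (A ** X t)) (at t)"
    using assms(4,5) by (simp add: X_def A_def)
  have X0: "X 0 = mat 1" using assms(3,5) by (simp add: X_def)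
  have RV: "Range V = span S" using assms(6) i by (simp add: attainable_def S_def)
  have W_eq: "W = (*v) T ` span S"
    unfolding W_def RV[symmetric] Range_def by (auto simp: matrix_vector_mul_assoc[symmetric])
  have att: "attainable N XJ XT Phi i = span Si"
    unfolding attainable_def Si_def X_def T_def S_def i S_Suc
    by (simp add: matrix_vector_mul_assoc[symmetric])
  have K_sub: "subspace K" unfolding K_def Kr_def by (rule subspace_span)
  have KA: "\<And>x. x \<in> K \<Longrightarrow> A *v x \<in> K"
    unfolding K_def using Kr_invariant[where 'n=6] by simp
  have WK: "W \<subseteq> K"
  proof
    fix w assume w: "w \<in> W"
    have "w \<in> ((*v) A ^^ 0) ` W" using w by simp
    then have "w \<in> (\<Union>j<6. (((*v) A) ^^ j) ` W)" by (rule UN_I[of 0, rotated]) simp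
    then show "w \<in> K" unfolding K_def Kr_def by (rule span_base)
  qed
  have R: "Range (augctrl A (Phi i) (T ** V)) = span G"
    unfolding W_def G_def by (rule aug_range)
  have 0: "0 \<in> S" unfolding S_def using vel_zero[of XJ XT Phi n "\<lambda>_. 0", symmetric] by blast
  have "span G \<subseteq> span Si"
  proof (rule span_minimal[OF _ subspace_span], rule subsetI)
    fix x assume "x \<in> G"
    then consider "x = Phi i" | j w where "j < 6" "w \<in> W" "x = (((*v) A) ^^ j) w"
      unfolding G_def by blast
    then show "x \<in> span Si"
    proof cases
      case 1
      have "Phi i = X 0 *v (T *v 0) + 1 *\<^sub>R Phi i" by simp
      then have "x \<in> Si" unfolding Si_def 1 using 0 by blast
      then show ?thesis by (rule span_base)
    next
      case 2
      have a: "x \<in> span {X t *v u | t u. u \<in> W}" unfolding 2(3) by (rule deriv_span[OF dX X0 2(2)])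
      have b: "{X t *v u | t u. u \<in> W} \<subseteq> span Si"
      proof clarify
        fix t u assume "u \<in> W"
        then obtain v' where v': "v' \<in> span S" "u = T *v v'" unfolding W_eq by blast
        have lin: "linear (\<lambda>v. X t *v (T *v v))"
          by (simp add: linear_compose[OF matrix_vector_mul_linear matrix_vector_mul_linear, unfolded o_def])
        have "X t *v u \<in> (\<lambda>v. X t *v (T *v v)) ` span S" using v' by blast
        also have "\<dots> = span ((\<lambda>v. X t *v (T *v v)) ` S)" by (rule linear_span_image[OF lin, symmetric])
        also have "\<dots> \<subseteq> span Si"
        proof (rule span_mono, clarify)
          fix v assume "v \<in> S"
          moreover have "X t *v (T *v v) = X t *v (T *v v) + 0 *\<^sub>R Phi i" by simp
          ultimately show "X t *v (T *v v) \<in> Si" unfolding Si_def by blast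
        qed
        finally show "X t *v u \<in> span Si" .
      qed
      show ?thesis using a span_minimal[OF b subspace_span] by blast
    qed
  qed
  moreover have "span Si \<subseteq> span G"
  proof (rule span_minimal[OF _ subspace_span], clarify)
    fix x assume "x \<in> Si"
    then obtain v t c where x: "x = X t *v (T *v v) + c *\<^sub>R Phi i" "v \<in> S" unfolding Si_def by blast
    have "T *v v \<in> W" unfolding W_eq using x(2) span_base by blast
    then have "X t *v (T *v v) \<in> K" using flow_invariant[OF K_sub KA dX X0] WK by blast
    moreover have "K \<subseteq> span G" unfolding K_def Kr_def G_def by (rule span_mono) auto
    moreover have "Phi i \<in> span G" unfolding G_def by (rule span_base) simp
    ultimately show "x \<in> span G" unfolding x(1) by (intro span_add span_mul) auto
  qed
  ultimately have "Range (augctrl A (Phi i) (T ** V)) = attainable N XJ XT Phi i"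
    using R att by blast
  then show ?thesis by (simp add: A_def T_def)
qed

end
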